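(* For the hypercube $Q_n$: (1) $str(Q_2)\ge6$, $str(Q_3)\ge11$, $str(Q_4)\ge21$; (2) $str(Q_n)\ge 2^n+4n-12$ for $5\le n\le 9$; (3) $str(Q_{2m})\ge 2^{2m}+m^2+4$ for all $m\ge5$; (4) $str(Q_{2m-1})\ge 2^{2m-1}+m^2-m+4$ for all $m\ge6$.
   Context: $Q_n$ is the $n$-dimensional hypercube (vertex set $\mathbb Z_2^n$, adjacency iff differing in exactly one coordinate), of order $2^n$. For a graph $G$ of order $p$, a numbering is a bijection $f:V(G)\to[1,p]$; $str_f(G)=\max\{f(u)+f(v): uv\in E(G)\}$ and $str(G)=\min_f str_f(G)$. *)

theory Defs
  imports Main
begin

definition hc_verts :: "nat \<Rightarrow> bool list set" where
  "hc_verts n = {xs. length xs = n}"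

definition hc_adj :: "nat \<Rightarrow> bool list \<Rightarrow> bool list \<Rightarrow> bool" where
  "hc_adj n xs ys \<longleftrightarrow> xs \<in> hc_verts n \<and> ys \<in> hc_verts n \<and>
     card {i. i < n \<and> xs ! i \<noteq> ys ! i} = 1"

definition numbering :: "'a set \<Rightarrow> ('a \<Rightarrow> nat) \<Rightarrow> bool" where
  "numbering V f \<longleftrightarrow> bij_betw f V {1..card V}"

definition str_f :: "'a set \<Rightarrow> ('a \<Rightarrow> 'a \<Rightarrow> bool) \<Rightarrow> ('a \<Rightarrow> nat) \<Rightarrow> nat" where
  "str_f V E f = Max {f u + f v | u v. u \<in> V \<and> v \<in> V \<and> E u v}"

definition strength :: "'a set \<Rightarrow> ('a \<Rightarrow> 'a \<Rightarrow> bool) \<Rightarrow> nat" where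
  "strength V E = Min {str_f V E f | f. numbering V f}"

definition str_Q :: "nat \<Rightarrow> nat" where
  "str_Q n = strength (hc_verts n) (hc_adj n)"

end

theory Submission imports Defs begin

definition dif :: "nat \<Rightarrow> bool list \<Rightarrow> bool list \<Rightarrow> nat set" where
  "dif n x y = {i. i < n \<and> x ! i \<noteq> y ! i}"

definition Nb :: "nat \<Rightarrow> bool list \<Rightarrow> bool list set" where
  "Nb n x = {y. hc_adj n x y}"

lemma dif_sym: "dif n x y = dif n y x" unfolding dif_def by auto

lemma dif_trans: "dif n x z = dif n x y - dif n y z \<union> (dif n y z - dif n x y)"
  unfolding dif_def by auto

lemma dif_empty: "x \<in> hc_verts n \<Longrightarrow> y \<in> hc_verts n \<Longrightarrow> dif n x y = {} \<Longrightarrow> x = y"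
  unfolding dif_def hc_verts_def by (auto intro: nth_equalityI)

lemma fin_V: "finite (hc_verts n)"
  unfolding hc_verts_def by (rule finite_list_length)

lemma card_V: "card (hc_verts n) = 2 ^ n"
proof -
  have "hc_verts n = {xs. set xs \<subseteq> UNIV \<and> length xs = n}" unfolding hc_verts_def by auto
  then show ?thesis using card_lists_length_eq[of "UNIV::bool set" n] by simp
qed

lemma Nb_sub: "Nb n x \<subseteq> hc_verts n" unfolding Nb_def hc_adj_def by auto

lemma Nb_iff: "y \<in> Nb n x \<longleftrightarrow> x \<in> hc_verts n \<and> y \<in> hc_verts n \<and> card (dif n x y) = 1"
  unfolding Nb_def hc_adj_def dif_def by auto

lemma dif_upd: "x \<in> hc_verts n \<Longrightarrow> i < n \<Longrightarrow> dif n x (x[i := \<not> x ! i]) = {i}"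
  unfolding dif_def hc_verts_def by (auto simp: nth_list_update)

lemma Nb_eq: "x \<in> hc_verts n \<Longrightarrow> Nb n x = (\<lambda>i. x[i := \<not> x ! i]) ` {..<n}"
proof (rule set_eqI, rule iffI)
  fix y assume x: "x \<in> hc_verts n" and y: "y \<in> Nb n x"
  then have yv: "y \<in> hc_verts n" and c: "card (dif n x y) = 1" using Nb_iff by auto
  then obtain i where i: "dif n x y = {i}" using card_1_singletonE by blast
  then have "i < n" unfolding dif_def by auto
  have "dif n (x[i := \<not> x ! i]) x = {i}"
    using dif_upd[OF x \<open>i<n\<close>] dif_sym[of n "x[i := \<not> x ! i]" x] by simp
  then have "dif n (x[i := \<not> x ! i]) y = {}"
    using dif_trans[of n "x[i := \<not> x ! i]" y x] i by simp
  moreover have "x[i := \<not> x ! i] \<in> hc_verts n" using x unfolding hc_verts_def by simp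
  ultimately have "y = x[i := \<not> x ! i]" using dif_empty yv by blast
  then show "y \<in> (\<lambda>i. x[i := \<not> x ! i]) ` {..<n}" using \<open>i<n\<close> by auto
next
  fix y assume x: "x \<in> hc_verts n" and "y \<in> (\<lambda>i. x[i := \<not> x ! i]) ` {..<n}"
  then obtain i where "i < n" "y = x[i := \<not> x ! i]" by auto
  then show "y \<in> Nb n x" using Nb_iff dif_upd[OF x] x unfolding hc_verts_def by auto
qed

lemma card_Nb: "x \<in> hc_verts n \<Longrightarrow> card (Nb n x) = n"
proof -
  assume x: "x \<in> hc_verts n"
  have "inj_on (\<lambda>i. x[i := \<not> x ! i]) {..<n}"
  proof (rule inj_onI)
    fix i j assume ij: "i \<in> {..<n}" "j \<in> {..<n}" and e: "x[i := \<not> x ! i] = x[j := \<not> x ! j]"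
    have "{i} = {j}" using dif_upd[OF x, of i] dif_upd[OF x, of j] ij arg_cong[OF e, of "dif n x"] by simp
    then show "i = j" by simp
  qed
  then show ?thesis using Nb_eq[OF x] by (simp add: card_image)
qed

lemma fin_Nb: "finite (Nb n x)" using Nb_sub fin_V finite_subset by blast

lemma common_dif:
  assumes "w \<in> Nb n x" "w \<in> Nb n y" "x \<noteq> y"
  shows "card (dif n x y) = 2 \<and> (\<exists>i. dif n x w = {i} \<and> i \<in> dif n x y)"
proof -
  obtain i where i: "dif n x w = {i}" using assms(1) Nb_iff card_1_singletonE by metis
  obtain j where j: "dif n y w = {j}" using assms(2) Nb_iff card_1_singletonE by metis
  have xv: "x \<in> hc_verts n" "y \<in> hc_verts n" using assms Nb_iff by auto
  have "dif n w y = {j}" using j dif_sym[of n w y] by simp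
  then have d: "dif n x y = {i} - {j} \<union> ({j} - {i})"
    using dif_trans[of n x y w] i by simp
  have "i \<noteq> j" using d dif_empty xv assms(3) by auto
  then show ?thesis using d i by auto
qed

lemma card_inter2:
  assumes "x \<noteq> y"
  shows "card (Nb n x \<inter> Nb n y) \<le> 2"
proof (cases "Nb n x \<inter> Nb n y = {}")
  case True then show ?thesis by simp
next
  case False
  then obtain w where w: "w \<in> Nb n x" "w \<in> Nb n y" by auto
  have c2: "card (dif n x y) = 2" using common_dif[OF w assms] by auto
  define h where "h w = (THE i. dif n x w = {i})" for w
  have hw: "h w \<in> dif n x y \<and> dif n x w = {h w}" if "w \<in> Nb n x \<inter> Nb n y" for w
    using common_dif[of w n x y] that assms unfolding h_def by auto
  have "inj_on h (Nb n x \<inter> Nb n y)"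
  proof (rule inj_onI)
    fix u v assume u: "u \<in> Nb n x \<inter> Nb n y" and v: "v \<in> Nb n x \<inter> Nb n y" and "h u = h v"
    then have "dif n x u = dif n x v" using hw[OF u] hw[OF v] by simp
    then have "dif n u v = {}" using dif_trans[of n u v x] dif_sym[of n u x] by simp
    then show "u = v" using dif_empty u v Nb_iff by blast
  qed
  moreover have "h ` (Nb n x \<inter> Nb n y) \<subseteq> dif n x y" using hw by auto
  moreover have "finite (dif n x y)" unfolding dif_def by auto
  ultimately have "card (Nb n x \<inter> Nb n y) \<le> card (dif n x y)"
    using card_inj_on_le by blast
  then show ?thesis using c2 by simp
qed

lemma fin_dif: "finite (dif n x y)" unfolding dif_def by auto

lemma triangle:
  assumes xyz: "x \<noteq> y" "x \<noteq> z" "y \<noteq> z"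
    and p: "Nb n x \<inter> Nb n y \<noteq> {}" "Nb n x \<inter> Nb n z \<noteq> {}" "Nb n y \<inter> Nb n z \<noteq> {}"
  shows "Nb n x \<inter> Nb n y \<inter> Nb n z \<noteq> {}"
proof -
  obtain w1 where w1: "w1 \<in> Nb n x" "w1 \<in> Nb n y" using p(1) by auto
  obtain w2 where w2: "w2 \<in> Nb n x" "w2 \<in> Nb n z" using p(2) by auto
  obtain w3 where w3: "w3 \<in> Nb n y" "w3 \<in> Nb n z" using p(3) by auto
  have xv: "x \<in> hc_verts n" "y \<in> hc_verts n" "z \<in> hc_verts n" using w1 w2 Nb_iff by auto
  have c1: "card (dif n x y) = 2" using common_dif[OF w1 xyz(1)] by simp
  have c2: "card (dif n x z) = 2" using common_dif[OF w2 xyz(2)] by simp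
  have c3: "card (dif n y z) = 2" using common_dif[OF w3 xyz(3)] by simp
  have d3: "dif n y z = dif n x y - dif n x z \<union> (dif n x z - dif n x y)"
    using dif_trans[of n y z x] dif_sym[of n y x] by simp
  have "dif n x y \<inter> dif n x z \<noteq> {}"
  proof
    assume e: "dif n x y \<inter> dif n x z = {}"
    then have "dif n y z = dif n x y \<union> dif n x z" using d3 by auto
    then have "card (dif n y z) = 4" using card_Un_disjoint[OF fin_dif fin_dif e] c1 c2 by simp
    then show False using c3 by simp
  qed
  then obtain a where a: "a \<in> dif n x y" "a \<in> dif n x z" by auto
  then have an: "a < n" unfolding dif_def by auto
  define w where "w = x[a := \<not> x ! a]"
  have dxw: "dif n x w = {a}" using dif_upd[OF xv(1) an] w_def by simp
  have wv: "w \<in> hc_verts n" using xv(1) unfolding w_def hc_verts_def by simp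
  have "dif n y w = dif n x y - {a}"
    using dif_trans[of n y w x] dif_sym[of n y x] dxw a(1) by auto
  then have "card (dif n y w) = 1" using c1 a(1) fin_dif by simp
  then have "w \<in> Nb n y" using Nb_iff xv wv by simp
  moreover have "dif n z w = dif n x z - {a}"
    using dif_trans[of n z w x] dif_sym[of n z x] dxw a(2) by auto
  then have "card (dif n z w) = 1" using c2 a(2) fin_dif by simp
  then have "w \<in> Nb n z" using Nb_iff xv wv by simp
  moreover have "w \<in> Nb n x" using Nb_iff xv wv dxw by simp
  ultimately show ?thesis by blast
qed

lemma arith0:
  fixes pab pac pad pbc pbd pcd tacd tbcd :: nat
  assumes z: "pab = 0" and b: "pac \<le> 2" "pad \<le> 2" "pbc \<le> 2" "pbd \<le> 2" "pcd \<le> 2"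
   and m: "tacd \<le> pac" "tacd \<le> pad" "tacd \<le> pcd"
   and i: "1 \<le> pac \<Longrightarrow> 1 \<le> pad \<Longrightarrow> 1 \<le> pcd \<Longrightarrow> 1 \<le> tacd"
  shows "pab+pac+pad+pbc+pbd+pcd \<le> 9 + tacd + tbcd"
proof (cases "1 \<le> pac \<and> 1 \<le> pad \<and> 1 \<le> pcd")
  case True then show ?thesis using i z b by linarith
next
  case False
  then have "pac = 0 \<or> pad = 0 \<or> pcd = 0" by auto
  then show ?thesis using z b by linarith
qed
lemma arith4:
  fixes pab pac pad pbc pbd pcd tabc tabd tacd tbcd q :: nat
  assumes b: "pab \<le> 2" "pac \<le> 2" "pad \<le> 2" "pbc \<le> 2" "pbd \<le> 2" "pcd \<le> 2"
   and m: "tabc \<le> pab" "tabc \<le> pac" "tabc \<le> pbc" "tabd \<le> pab" "tabd \<le> pad" "tabd \<le> pbd"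
   "tacd \<le> pac" "tacd \<le> pad" "tacd \<le> pcd" "tbcd \<le> pbc" "tbcd \<le> pbd" "tbcd \<le> pcd"
   and qq: "q \<le> tabc" "q \<le> tabd" "q \<le> tacd" "q \<le> tbcd"
   and iabc: "1 \<le> pab \<Longrightarrow> 1 \<le> pac \<Longrightarrow> 1 \<le> pbc \<Longrightarrow> 1 \<le> tabc"
   and iabd: "1 \<le> pab \<Longrightarrow> 1 \<le> pad \<Longrightarrow> 1 \<le> pbd \<Longrightarrow> 1 \<le> tabd"
   and iacd: "1 \<le> pac \<Longrightarrow> 1 \<le> pad \<Longrightarrow> 1 \<le> pcd \<Longrightarrow> 1 \<le> tacd"
   and ibcd: "1 \<le> pbc \<Longrightarrow> 1 \<le> pbd \<Longrightarrow> 1 \<le> pcd \<Longrightarrow> 1 \<le> tbcd"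
  shows "pab+pac+pad+pbc+pbd+pcd + q \<le> 9 + tabc+tabd+tacd+tbcd"
proof (cases "q = 0")
  case False then show ?thesis using b qq by linarith
next
  case q0: True
  show ?thesis
  proof (cases "1 \<le> pab \<and> 1 \<le> pac \<and> 1 \<le> pad \<and> 1 \<le> pbc \<and> 1 \<le> pbd \<and> 1 \<le> pcd")
    case True then show ?thesis using b q0 iabc iabd iacd ibcd by linarith
  next
    case False
    then consider "pab = 0" | "pac = 0" | "pad = 0" | "pbc = 0" | "pbd = 0" | "pcd = 0" by linarith
    then show ?thesis
    proof cases
      case 1
      have "tabc = 0" "tabd = 0" using m \<open>pab = 0\<close> by linarith+
      moreover have "pab+pac+pad+pbc+pbd+pcd \<le> 9 + tacd + tbcd"
        by (rule arith0) (use \<open>pab = 0\<close> b m iacd in \<open>linarith | blast\<close>)+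
      ultimately show ?thesis using q0 by linarith
    next
      case 2
      have "tabc = 0" "tacd = 0" using m \<open>pac = 0\<close> by linarith+
      moreover have "pac+pab+pad+pbc+pcd+pbd \<le> 9 + tabd + tbcd"
        by (rule arith0) (use \<open>pac = 0\<close> b m iabd in \<open>linarith | blast\<close>)+
      ultimately show ?thesis using q0 by linarith
    next
      case 3
      have "tabd = 0" "tacd = 0" using m \<open>pad = 0\<close> by linarith+
      moreover have "pad+pab+pac+pbd+pcd+pbc \<le> 9 + tabc + tbcd"
        by (rule arith0) (use \<open>pad = 0\<close> b m iabc in \<open>linarith | blast\<close>)+
      ultimately show ?thesis using q0 by linarith
    next
      case 4
      have "tabc = 0" "tbcd = 0" using m \<open>pbc = 0\<close> by linarith+
      moreover have "pbc+pab+pbd+pac+pcd+pad \<le> 9 + tabd + tacd"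
        by (rule arith0) (use \<open>pbc = 0\<close> b m iabd in \<open>linarith | blast\<close>)+
      ultimately show ?thesis using q0 by linarith
    next
      case 5
      have "tabd = 0" "tbcd = 0" using m \<open>pbd = 0\<close> by linarith+
      moreover have "pbd+pab+pbc+pad+pcd+pac \<le> 9 + tabc + tacd"
        by (rule arith0) (use \<open>pbd = 0\<close> b m iabc in \<open>linarith | blast\<close>)+
      ultimately show ?thesis using q0 by linarith
    next
      case 6
      have "tacd = 0" "tbcd = 0" using m \<open>pcd = 0\<close> by linarith+
      moreover have "pcd+pac+pbc+pad+pbd+pab \<le> 9 + tabc + tabd"
        by (rule arith0) (use \<open>pcd = 0\<close> b m iabc in \<open>linarith | blast\<close>)+
      ultimately show ?thesis using q0 by linarith
    qed
  qed
qed

lemma four_sets: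
  fixes A B C D :: "'a set"
  assumes fin: "finite A" "finite B" "finite C" "finite D"
    and cA: "card A = n" and cB: "card B = n" and cC: "card C = n" and cD: "card D = n"
    and p: "card (A \<inter> B) \<le> 2" "card (A \<inter> C) \<le> 2" "card (A \<inter> D) \<le> 2"
           "card (B \<inter> C) \<le> 2" "card (B \<inter> D) \<le> 2" "card (C \<inter> D) \<le> 2"
    and t1: "A \<inter> B \<noteq> {} \<Longrightarrow> A \<inter> C \<noteq> {} \<Longrightarrow> B \<inter> C \<noteq> {} \<Longrightarrow> A \<inter> B \<inter> C \<noteq> {}"
    and t2: "A \<inter> B \<noteq> {} \<Longrightarrow> A \<inter> D \<noteq> {} \<Longrightarrow> B \<inter> D \<noteq> {} \<Longrightarrow> A \<inter> B \<inter> D \<noteq> {}"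
    and t3: "A \<inter> C \<noteq> {} \<Longrightarrow> A \<inter> D \<noteq> {} \<Longrightarrow> C \<inter> D \<noteq> {} \<Longrightarrow> A \<inter> C \<inter> D \<noteq> {}"
    and t4: "B \<inter> C \<noteq> {} \<Longrightarrow> B \<inter> D \<noteq> {} \<Longrightarrow> C \<inter> D \<noteq> {} \<Longrightarrow> B \<inter> C \<inter> D \<noteq> {}"
  shows "card (A \<union> B \<union> C \<union> D) + 9 \<ge> 4 * n"
proof -
  have e1: "card (A \<union> B) + card (A \<inter> B) = card A + card B" using card_Un_Int[of A B] fin by simp
  have e2: "card (A \<union> B \<union> C) + card ((A \<union> B) \<inter> C) = card (A \<union> B) + card C"
    using card_Un_Int[of "A \<union> B" C] fin by simp
  have "(A \<union> B) \<inter> C = (A \<inter> C) \<union> (B \<inter> C)" by auto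
  moreover have "card ((A \<inter> C) \<union> (B \<inter> C)) + card (A \<inter> B \<inter> C) = card (A \<inter> C) + card (B \<inter> C)"
    using card_Un_Int[of "A \<inter> C" "B \<inter> C"] fin by (simp add: Int_ac Int_absorb)
  ultimately have e3: "card ((A \<union> B) \<inter> C) + card (A \<inter> B \<inter> C) = card (A \<inter> C) + card (B \<inter> C)" by simp
  have e4: "card (A \<union> B \<union> C \<union> D) + card ((A \<union> B \<union> C) \<inter> D) = card (A \<union> B \<union> C) + card D"
    using card_Un_Int[of "A \<union> B \<union> C" D] fin by simp
  have q1: "(A \<union> B \<union> C) \<inter> D = ((A \<inter> D) \<union> (B \<inter> D)) \<union> (C \<inter> D)" by auto
  have f1: "card (((A \<inter> D) \<union> (B \<inter> D)) \<union> (C \<inter> D)) + card (((A \<inter> D) \<union> (B \<inter> D)) \<inter> (C \<inter> D))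
      = card ((A \<inter> D) \<union> (B \<inter> D)) + card (C \<inter> D)"
    using card_Un_Int[of "(A \<inter> D) \<union> (B \<inter> D)" "C \<inter> D"] fin by simp
  have f2: "card ((A \<inter> D) \<union> (B \<inter> D)) + card (A \<inter> B \<inter> D) = card (A \<inter> D) + card (B \<inter> D)"
    using card_Un_Int[of "A \<inter> D" "B \<inter> D"] fin by (simp add: Int_ac Int_absorb)
  have q2: "((A \<inter> D) \<union> (B \<inter> D)) \<inter> (C \<inter> D) = (A \<inter> C \<inter> D) \<union> (B \<inter> C \<inter> D)" by auto
  have f3: "card ((A \<inter> C \<inter> D) \<union> (B \<inter> C \<inter> D)) + card (A \<inter> B \<inter> C \<inter> D) = card (A \<inter> C \<inter> D) + card (B \<inter> C \<inter> D)"
    using card_Un_Int[of "A \<inter> C \<inter> D" "B \<inter> C \<inter> D"] fin by (simp add: Int_ac Int_absorb)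
  have g1: "card ((A \<union> B \<union> C) \<inter> D) = card (((A \<inter> D) \<union> (B \<inter> D)) \<union> (C \<inter> D))" using q1 by simp
  have g2: "card (((A \<inter> D) \<union> (B \<inter> D)) \<inter> (C \<inter> D)) = card ((A \<inter> C \<inter> D) \<union> (B \<inter> C \<inter> D))" using q2 by simp
  have e5: "card ((A \<union> B \<union> C) \<inter> D) + card (A \<inter> B \<inter> D) + card (A \<inter> C \<inter> D) + card (B \<inter> C \<inter> D)
     = card (A \<inter> D) + card (B \<inter> D) + card (C \<inter> D) + card (A \<inter> B \<inter> C \<inter> D)"
    using f1 f2 f3 g1 g2 by linarith
  have m: "card (A \<inter> B \<inter> C) \<le> card (A \<inter> B)" "card (A \<inter> B \<inter> C) \<le> card (A \<inter> C)" "card (A \<inter> B \<inter> C) \<le> card (B \<inter> C)"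
     "card (A \<inter> B \<inter> D) \<le> card (A \<inter> B)" "card (A \<inter> B \<inter> D) \<le> card (A \<inter> D)" "card (A \<inter> B \<inter> D) \<le> card (B \<inter> D)"
     "card (A \<inter> C \<inter> D) \<le> card (A \<inter> C)" "card (A \<inter> C \<inter> D) \<le> card (A \<inter> D)" "card (A \<inter> C \<inter> D) \<le> card (C \<inter> D)"
     "card (B \<inter> C \<inter> D) \<le> card (B \<inter> C)" "card (B \<inter> C \<inter> D) \<le> card (B \<inter> D)" "card (B \<inter> C \<inter> D) \<le> card (C \<inter> D)"
     "card (A \<inter> B \<inter> C \<inter> D) \<le> card (A \<inter> B \<inter> C)" "card (A \<inter> B \<inter> C \<inter> D) \<le> card (A \<inter> B \<inter> D)"
     "card (A \<inter> B \<inter> C \<inter> D) \<le> card (A \<inter> C \<inter> D)" "card (A \<inter> B \<inter> C \<inter> D) \<le> card (B \<inter> C \<inter> D)"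
    by (auto intro!: card_mono simp: fin)
  have ne: "\<And>X::'a set. finite X \<Longrightarrow> X \<noteq> {} \<longleftrightarrow> card X \<ge> 1"
    by (simp add: Suc_le_eq card_gt_0_iff)
  have T1: "card (A \<inter> B) \<ge> 1 \<Longrightarrow> card (A \<inter> C) \<ge> 1 \<Longrightarrow> card (B \<inter> C) \<ge> 1 \<Longrightarrow> card (A \<inter> B \<inter> C) \<ge> 1"
    using t1 ne fin by (meson finite_Int)
  have T2: "card (A \<inter> B) \<ge> 1 \<Longrightarrow> card (A \<inter> D) \<ge> 1 \<Longrightarrow> card (B \<inter> D) \<ge> 1 \<Longrightarrow> card (A \<inter> B \<inter> D) \<ge> 1"
    using t2 ne fin by (meson finite_Int)
  have T3: "card (A \<inter> C) \<ge> 1 \<Longrightarrow> card (A \<inter> D) \<ge> 1 \<Longrightarrow> card (C \<inter> D) \<ge> 1 \<Longrightarrow> card (A \<inter> C \<inter> D) \<ge> 1"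
    using t3 ne fin by (meson finite_Int)
  have T4: "card (B \<inter> C) \<ge> 1 \<Longrightarrow> card (B \<inter> D) \<ge> 1 \<Longrightarrow> card (C \<inter> D) \<ge> 1 \<Longrightarrow> card (B \<inter> C \<inter> D) \<ge> 1"
    using t4 ne fin by (meson finite_Int)
  have "card (A \<inter> B) + card (A \<inter> C) + card (A \<inter> D) + card (B \<inter> C) + card (B \<inter> D) + card (C \<inter> D)
      + card (A \<inter> B \<inter> C \<inter> D) \<le> 9 + card (A \<inter> B \<inter> C) + card (A \<inter> B \<inter> D) + card (A \<inter> C \<inter> D) + card (B \<inter> C \<inter> D)"
    by (rule arith4[OF p m T1 T2 T3 T4])
  then show ?thesis using e1 e2 e3 e4 e5 cA cB cC cD by linarith
qed


definition NS :: "nat \<Rightarrow> bool list set \<Rightarrow> bool list set" where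
  "NS n S = (\<Union>x\<in>S. Nb n x)"

lemma fin_NS: "finite S \<Longrightarrow> finite (NS n S)" unfolding NS_def using fin_Nb by auto

lemma N1: assumes "S \<subseteq> hc_verts n" "card S = 1" shows "card (NS n S) = n"
proof -
  obtain x where "S = {x}" using assms(2) card_1_singletonE by blast
  then show ?thesis using assms(1) card_Nb unfolding NS_def by auto
qed

lemma N2: assumes "S \<subseteq> hc_verts n" "card S = 2" shows "2 * n \<le> card (NS n S) + 2"
proof -
  obtain x y where xy: "S = {x, y}" "x \<noteq> y" using card_2_iff[THEN iffD1, OF assms(2)] by blast
  have "card (Nb n x \<union> Nb n y) + card (Nb n x \<inter> Nb n y) = card (Nb n x) + card (Nb n y)"
    using card_Un_Int[of "Nb n x" "Nb n y"] fin_Nb by simp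
  moreover have "card (Nb n x) = n" "card (Nb n y) = n" using card_Nb assms(1) xy by auto
  moreover have NSe: "NS n S = Nb n x \<union> Nb n y" unfolding NS_def xy by auto
  ultimately show ?thesis using card_inter2[OF xy(2), of n] unfolding NSe by linarith
qed

lemma N4: assumes "S \<subseteq> hc_verts n" "card S = 4" shows "4 * n \<le> card (NS n S) + 9"
proof -
  obtain a B where aB: "S = insert a B" "a \<notin> B" "card B = 3"
    using card_eq_SucD[of S 3] assms(2) by auto
  obtain b c d where B: "B = {b, c, d}" "b \<noteq> c" "c \<noteq> d" "b \<noteq> d"
    using card_3_iff[THEN iffD1, OF aB(3)] by blast
  have ab: "a \<noteq> b" and ac: "a \<noteq> c" and ad: "a \<noteq> d" using aB B by auto
  have bc: "b \<noteq> c" and cd: "c \<noteq> d" and bd: "b \<noteq> d" using B by auto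
  have v: "a \<in> hc_verts n" "b \<in> hc_verts n" "c \<in> hc_verts n" "d \<in> hc_verts n"
    using assms(1) aB B by auto
  have "NS n S = Nb n a \<union> Nb n b \<union> Nb n c \<union> Nb n d" unfolding NS_def aB B by auto
  moreover have "card (Nb n a \<union> Nb n b \<union> Nb n c \<union> Nb n d) + 9 \<ge> 4 * n"
    by (rule four_sets[OF fin_Nb fin_Nb fin_Nb fin_Nb card_Nb[OF v(1)] card_Nb[OF v(2)] card_Nb[OF v(3)] card_Nb[OF v(4)]
       card_inter2[OF ab] card_inter2[OF ac] card_inter2[OF ad] card_inter2[OF bc] card_inter2[OF bd] card_inter2[OF cd]
       triangle[OF ab ac bc] triangle[OF ab ad bd] triangle[OF ac ad cd] triangle[OF bc bd cd]])
  ultimately show ?thesis by simp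
qed

lemma ext:
  assumes "finite S" "x \<notin> S" "x \<in> hc_verts n"
  shows "card (NS n S) + n \<le> card (NS n (insert x S)) + 2 * card S"
proof -
  have e: "NS n (insert x S) = Nb n x \<union> NS n S" unfolding NS_def by auto
  have c: "card (Nb n x \<union> NS n S) + card (Nb n x \<inter> NS n S) = card (Nb n x) + card (NS n S)"
    using card_Un_Int[of "Nb n x" "NS n S"] fin_Nb fin_NS[OF assms(1)] by simp
  have "Nb n x \<inter> NS n S = (\<Union>s\<in>S. Nb n x \<inter> Nb n s)" unfolding NS_def by auto
  then have "card (Nb n x \<inter> NS n S) \<le> (\<Sum>s\<in>S. card (Nb n x \<inter> Nb n s))"
    using card_UN_le[OF assms(1), of "\<lambda>s. Nb n x \<inter> Nb n s"] by simp
  also have "\<dots> \<le> (\<Sum>s\<in>S. 2)"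
  proof (rule sum_mono)
    fix s assume "s \<in> S"
    then have "x \<noteq> s" using assms(2) by auto
    then show "card (Nb n x \<inter> Nb n s) \<le> 2" by (rule card_inter2)
  qed
  also have "\<dots> = 2 * card S" by simp
  finally have "card (Nb n x \<inter> NS n S) \<le> 2 * card S" .
  then show ?thesis unfolding e using c card_Nb[OF assms(3)] by linarith
qed

lemma Ngen: "S \<subseteq> hc_verts n \<Longrightarrow> card S = k + 4 \<Longrightarrow> (k + 4) * n + 3 \<le> card (NS n S) + (k + 4) * (k + 3)"
proof (induction k arbitrary: S)
  case 0 then show ?case using N4[of S n] by simp
next
  case (Suc k)
  have fin: "finite S"
  proof (rule ccontr)
    assume "infinite S" then show False using Suc.prems(2) by simp
  qed
  obtain x where x: "x \<in> S" using Suc.prems(2) by fastforce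
  define S' where "S' = S - {x}"
  have cS': "card S' = k + 4" using Suc.prems(2) x fin unfolding S'_def by simp
  have sub: "S' \<subseteq> hc_verts n" using Suc.prems(1) unfolding S'_def by auto
  have IH: "(k + 4) * n + 3 \<le> card (NS n S') + (k + 4) * (k + 3)" using Suc.IH[OF sub cS'] .
  have "S = insert x S'" using x unfolding S'_def by auto
  then have E: "card (NS n S') + n \<le> card (NS n S) + 2 * (k + 4)"
    using ext[of S' x n] fin x Suc.prems(1) cS' unfolding S'_def by auto
  have a1: "(Suc k + 4) * n = (k + 4) * n + n" by (simp add: algebra_simps)
  have a2: "(Suc k + 4) * (Suc k + 3) = (k + 4) * (k + 3) + 2 * (k + 4)" by (simp add: algebra_simps)
  show ?case using IH E a1 a2 by linarith
qed

lemma str_lower: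
  fixes V :: "'a set" and E :: "'a \<Rightarrow> 'a \<Rightarrow> bool"
  assumes fin: "finite V" and num: "numbering V f" and t1: "1 \<le> t" and tp: "t \<le> card V"
    and EV: "\<And>x y. E x y \<Longrightarrow> x \<in> V \<and> y \<in> V"
    and NB: "\<And>S. S \<subseteq> V \<Longrightarrow> card S = t \<Longrightarrow> B \<le> card (\<Union>x\<in>S. {y. E x y})"
    and B1: "1 \<le> B"
  shows "card V + B + 1 \<le> str_f V E f + t"
proof -
  define p where "p = card V"
  have bij: "bij_betw f V {1..p}" using num unfolding numbering_def p_def .
  have inj: "inj_on f V" and img: "f ` V = {1..p}" using bij unfolding bij_betw_def by auto
  define S where "S = {x \<in> V. p + 1 \<le> f x + t}"
  have "f ` S = {p + 1 - t..p}"
  proof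
    have fV: "\<forall>x\<in>V. 1 \<le> f x \<and> f x \<le> p" using img by force
    show "f ` S \<subseteq> {p + 1 - t..p}" using fV unfolding S_def by auto
    show "{p + 1 - t..p} \<subseteq> f ` S"
    proof
      fix k assume k: "k \<in> {p + 1 - t..p}"
      then have "k \<in> {1..p}" using t1 tp p_def by auto
      then obtain x where "x \<in> V" "f x = k" using img by (metis imageE)
      then show "k \<in> f ` S" using k unfolding S_def by auto
    qed
  qed
  moreover have "inj_on f S" using inj unfolding S_def by (rule inj_on_subset) auto
  ultimately have cS: "card S = t" using card_image[of f S] tp p_def by simp
  define U where "U = (\<Union>x\<in>S. {y. E x y})"
  have BU: "B \<le> card U" using NB[of S] cS unfolding U_def S_def by auto
  define A where "A = {f u + f v | u v. u \<in> V \<and> v \<in> V \<and> E u v}"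
  have "A \<subseteq> {..2 * p}"
  proof
    fix z assume "z \<in> A"
    then obtain u v where "z = f u + f v" "u \<in> V" "v \<in> V" using A_def by auto
    moreover have "f u \<le> p" "f v \<le> p" using img \<open>u \<in> V\<close> \<open>v \<in> V\<close> by auto
    ultimately show "z \<in> {..2 * p}" by auto
  qed
  then have finA: "finite A" using finite_subset by blast
  define s where "s = str_f V E f"
  have sA: "s = Max A" unfolding s_def str_f_def A_def by simp
  have bnd: "f y + p + 1 \<le> s + t" if yU: "y \<in> U" for y
  proof -
    obtain x where x: "x \<in> S" "E x y" using yU unfolding U_def by blast
    then have "f x + f y \<in> A" unfolding A_def S_def using EV by blast
    then have "f x + f y \<le> s" using sA finA by simp
    then show ?thesis using x(1) unfolding S_def by auto
  qed
  have yV: "U \<subseteq> V" unfolding U_def using EV by auto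
  have "f ` U \<subseteq> {1..s + t - (p + 1)}"
  proof
    fix z assume "z \<in> f ` U"
    then obtain y where y: "y \<in> U" "z = f y" by auto
    then have "f y \<ge> 1" using img yV by force
    then show "z \<in> {1..s + t - (p + 1)}" using bnd[OF y(1)] y(2) by auto
  qed
  moreover have "inj_on f U" using inj yV by (rule inj_on_subset)
  ultimately have "card U \<le> s + t - (p + 1)"
    using card_image card_mono[of "{1..s + t - (p + 1)}" "f ` U"] by fastforce
  moreover have "U \<noteq> {}" using BU B1 by auto
  then obtain y where "y \<in> U" by auto
  then have "p + 1 \<le> s + t" using bnd by fastforce
  ultimately show ?thesis using BU p_def s_def by linarith
qed

lemma strength_ge:
  fixes V :: "'a set" and E :: "'a \<Rightarrow> 'a \<Rightarrow> bool"
  assumes fin: "finite V"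
    and H: "\<And>f. numbering V f \<Longrightarrow> b \<le> str_f V E f"
  shows "b \<le> strength V E"
proof -
  define M where "M = {str_f V E f | f. numbering V f}"
  obtain h where h: "bij_betw h {1..card V} V" using ex_bij_betw_nat_finite_1[OF fin] by blast
  have "numbering V (inv_into {1..card V} h)" unfolding numbering_def using bij_betw_inv_into[OF h] .
  then have ne: "M \<noteq> {}" unfolding M_def by auto
  have "M \<subseteq> {..2 * card V} \<union> {Max {}}"
  proof
    fix z assume "z \<in> M"
    then obtain f where f: "z = str_f V E f" "numbering V f" unfolding M_def by auto
    then have img: "f ` V = {1..card V}" unfolding numbering_def bij_betw_def by auto
    define A where "A = {f u + f v | u v. u \<in> V \<and> v \<in> V \<and> E u v}"
    have Asub: "A \<subseteq> {..2 * card V}"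
    proof
      fix z assume "z \<in> A"
      then obtain u v where "z = f u + f v" "u \<in> V" "v \<in> V" using A_def by auto
      moreover have "f u \<le> card V" "f v \<le> card V" using img \<open>u \<in> V\<close> \<open>v \<in> V\<close> by auto
      ultimately show "z \<in> {..2 * card V}" by auto
    qed
    have zA: "z = Max A" unfolding f(1) str_f_def A_def by simp
    show "z \<in> {..2 * card V} \<union> {Max {}}"
    proof (cases "A = {}")
      case True then show ?thesis using zA by simp
    next
      case False
      then have "Max A \<in> A" using Asub finite_subset Max_in by blast
      then show ?thesis using zA Asub by auto
    qed
  qed
  then have "finite M" using finite_subset by blast
  moreover have "\<forall>z\<in>M. b \<le> z" using H unfolding M_def by auto
  ultimately show ?thesis using ne unfolding strength_def M_def[symmetric] by simp
qed

lemma strQ_bound: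
  assumes t1: "1 \<le> t" and tp: "t \<le> 2 ^ n" and B1: "1 \<le> B"
    and NB: "\<And>S. S \<subseteq> hc_verts n \<Longrightarrow> card S = t \<Longrightarrow> B \<le> card (NS n S)"
  shows "2 ^ n + B + 1 \<le> str_Q n + t"
proof -
  have "2 ^ n + B + 1 - t \<le> strength (hc_verts n) (hc_adj n)"
  proof (rule strength_ge[OF fin_V])
    fix f assume f: "numbering (hc_verts n) f"
    have "card (hc_verts n) + B + 1 \<le> str_f (hc_verts n) (hc_adj n) f + t"
    proof (rule str_lower[OF fin_V f t1])
      show "t \<le> card (hc_verts n)" using tp card_V by simp
      show "\<And>x y. hc_adj n x y \<Longrightarrow> x \<in> hc_verts n \<and> y \<in> hc_verts n" unfolding hc_adj_def by auto
      show "\<And>S. S \<subseteq> hc_verts n \<Longrightarrow> card S = t \<Longrightarrow> B \<le> card (\<Union>x\<in>S. {y. hc_adj n x y})"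
        using NB unfolding NS_def Nb_def by simp
      show "1 \<le> B" by fact
    qed
    then show "2 ^ n + B + 1 - t \<le> str_f (hc_verts n) (hc_adj n) f" using card_V by simp
  qed
  then show ?thesis unfolding str_Q_def by simp
qed

theorem mainTheorem18:
  shows "(str_Q 2 \<ge> 6 \<and> str_Q 3 \<ge> 11 \<and> str_Q 4 \<ge> 21)
    \<and> (\<forall>n. 5 \<le> n \<and> n \<le> 9 \<longrightarrow> str_Q n \<ge> 2 ^ n + 4 * n - 12)
    \<and> (\<forall>m. 5 \<le> m \<longrightarrow> str_Q (2 * m) \<ge> 2 ^ (2 * m) + m ^ 2 + 4)
    \<and> (\<forall>m. 6 \<le> m \<longrightarrow> str_Q (2 * m - 1) \<ge> 2 ^ (2 * m - 1) + m ^ 2 - m + 4)"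
proof (intro conjI allI impI)
  have "2 ^ 2 + 2 + 1 \<le> str_Q 2 + 1" by (rule strQ_bound) (use N1 in auto)
  then show "str_Q 2 \<ge> 6" by simp
  have "2 ^ 3 + 3 + 1 \<le> str_Q 3 + 1" by (rule strQ_bound) (use N1 in auto)
  then show "str_Q 3 \<ge> 11" by simp
  have "2 ^ 4 + 6 + 1 \<le> str_Q 4 + 2" by (rule strQ_bound) (use N2[of _ 4] in auto)
  then show "str_Q 4 \<ge> 21" by simp
next
  fix n :: nat assume n: "5 \<le> n \<and> n \<le> 9"
  have "4 \<le> (2::nat) ^ n"
  proof -
    have "(2::nat) ^ 2 \<le> 2 ^ n" using n by (intro power_increasing) auto
    then show ?thesis by simp
  qed
  then have "2 ^ n + (4 * n - 9) + 1 \<le> str_Q n + 4"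
  proof (intro strQ_bound)
    show "1 \<le> (4::nat)" "1 \<le> 4 * n - 9" using n by auto
    fix S assume "S \<subseteq> hc_verts n" "card S = 4"
    then have "4 * n \<le> card (NS n S) + 9" by (rule N4)
    then show "4 * n - 9 \<le> card (NS n S)" by linarith
  qed
  then show "str_Q n \<ge> 2 ^ n + 4 * n - 12" using n by linarith
next
  fix m :: nat assume m: "5 \<le> m"
  have tp: "m \<le> 2 ^ (2 * m)"
  proof -
    have "m < 2 ^ m" by (rule less_exp)
    also have "(2::nat) ^ m \<le> 2 ^ (2 * m)" by (intro power_increasing) auto
    finally show ?thesis by simp
  qed
  have "2 ^ (2 * m) + (m * m + m + 3) + 1 \<le> str_Q (2 * m) + m"
  proof (rule strQ_bound)
    show "1 \<le> m" "m \<le> 2 ^ (2 * m)" "1 \<le> m * m + m + 3" using m tp by auto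
    fix S assume S: "S \<subseteq> hc_verts (2 * m)" "card S = m"
    define k where "k = m - 4"
    have k: "m = k + 4" using m unfolding k_def by simp
    have "(k + 4) * (2 * m) + 3 \<le> card (NS (2 * m) S) + (k + 4) * (k + 3)"
      using Ngen[of S "2 * m" k] S k by simp
    moreover have "(k + 4) * (2 * m) = 2 * (m * m)" using k by simp
    moreover have "(k + 4) * (k + 3) + m = m * m" using k by (simp add: algebra_simps)
    ultimately show "m * m + m + 3 \<le> card (NS (2 * m) S)" by linarith
  qed
  then show "str_Q (2 * m) \<ge> 2 ^ (2 * m) + m ^ 2 + 4" by (simp add: power2_eq_square)
next
  fix m :: nat assume m: "6 \<le> m"
  have tp: "m \<le> 2 ^ (2 * m - 1)"
  proof -
    have "m < 2 ^ m" by (rule less_exp)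
    also have "(2::nat) ^ m \<le> 2 ^ (2 * m - 1)" using m by (intro power_increasing) auto
    finally show ?thesis by simp
  qed
  have "2 ^ (2 * m - 1) + (m * m + 3) + 1 \<le> str_Q (2 * m - 1) + m"
  proof (rule strQ_bound)
    show "1 \<le> m" "m \<le> 2 ^ (2 * m - 1)" "1 \<le> m * m + 3" using m tp by auto
    fix S assume S: "S \<subseteq> hc_verts (2 * m - 1)" "card S = m"
    define k where "k = m - 4"
    have k: "m = k + 4" using m unfolding k_def by simp
    have "(k + 4) * (2 * m - 1) + 3 \<le> card (NS (2 * m - 1) S) + (k + 4) * (k + 3)"
      using Ngen[of S "2 * m - 1" k] S k by simp
    moreover have "(k + 4) * (2 * m - 1) = (k + 4) * (k + 3) + m * m" using k by (simp add: algebra_simps)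
    ultimately show "m * m + 3 \<le> card (NS (2 * m - 1) S)" by linarith
  qed
  moreover have "m \<le> m * m" using m by simp
  ultimately show "str_Q (2 * m - 1) \<ge> 2 ^ (2 * m - 1) + m ^ 2 - m + 4"
    unfolding power2_eq_square by linarith
qed

end
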